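(* Let $\kappa$ be an uncountable regular cardinal and let $\mathcal{I}$ be a $\kappa$-complete proper ideal on $\kappa$ containing every bounded subset of $\kappa$, and suppose $\mathcal{I}$ contains an unbounded subset of $\kappa$. Let $\nu\in\{2,\kappa\}$. Then every subset of ${}^{\kappa}\nu$ is $\mathcal{I}$-analytic.
   Context: Work in ZFC. For $\mu\in\{2,\kappa\}$, ${}^{\kappa}\mu$ is the set of functions $\kappa\to\mu$. For $f\colon D\to\mu$ with $D\in\mathcal{I}$ let $\mathbf{N}_f=\{x\in{}^{\kappa}\mu: f\subseteq x\}$; the $\mathcal{I}$-topology $\tau_{\mathcal{I}}$ on ${}^{\kappa}\mu$ is generated by these sets. A function ${}^{\kappa}\kappa\to{}^{\kappa}\nu$ is $\mathcal{I}$-continuous if it is continuous when both spaces carry $\tau_{\mathcal{I}}$. A set $A\subseteq{}^{\kappa}\nu$ is $\mathcal{I}$-analytic if either $A=\emptyset$ or there are a $\tau_{\mathcal{I}}$-closed set $C\subseteq{}^{\kappa}\kappa$ and an $\mathcal{I}$-continuous function $\Phi\colon{}^{\kappa}\kappa\to{}^{\kappa}\nu$ with $\Phi(C)=A$. *)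

theory Defs
  imports "HOL-Analysis.Analysis"
begin

text \<open>The cardinal kappa is represented by a type 'k carrying a cardinal
  well-order r with Field r = UNIV (so 'k is identified with the ordinal kappa).
  Functions kappa to nu are total functions 'k to 'v (nu = 2 is bool, nu = kappa is 'k).\<close>

definition uncountable_regular_cardinal :: "'k rel \<Rightarrow> bool" where
  "uncountable_regular_cardinal r \<longleftrightarrow>
     Card_order r \<and> Field r = UNIV \<and> regularCard r \<and> \<not> countable (UNIV :: 'k set)"

definition bounded_in :: "'k rel \<Rightarrow> 'k set \<Rightarrow> bool" where
  "bounded_in r B \<longleftrightarrow> (\<exists>\<beta>. \<forall>x\<in>B. (x, \<beta>) \<in> r)"

definition ideal_on :: "'k set set \<Rightarrow> bool" where
  "ideal_on I \<longleftrightarrow> {} \<in> I \<and> (\<forall>A B. A \<in> I \<and> B \<subseteq> A \<longrightarrow> B \<in> I)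
     \<and> (\<forall>A B. A \<in> I \<and> B \<in> I \<longrightarrow> A \<union> B \<in> I)"

definition proper_ideal :: "'k set set \<Rightarrow> bool" where
  "proper_ideal I \<longleftrightarrow> ideal_on I \<and> UNIV \<notin> I"

definition complete_ideal :: "'k rel \<Rightarrow> 'k set set \<Rightarrow> bool" where
  "complete_ideal r I \<longleftrightarrow> (\<forall>F. F \<subseteq> I \<and> (card_of F, r) \<in> ordLess \<longrightarrow> \<Union>F \<in> I)"

definition I_basic :: "'k set set \<Rightarrow> ('k \<Rightarrow> 'v) set set" where
  "I_basic I = {{x. \<forall>d\<in>D. x d = f d} | D f. D \<in> I}"

definition I_topology :: "'k set set \<Rightarrow> ('k \<Rightarrow> 'v) topology" where
  "I_topology I = topology_generated_by (I_basic I)"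

definition I_analytic :: "'k set set \<Rightarrow> ('k \<Rightarrow> 'v) set \<Rightarrow> bool" where
  "I_analytic I A \<longleftrightarrow> A = {} \<or>
     (\<exists>(C :: ('k \<Rightarrow> 'k) set) (\<Phi> :: ('k \<Rightarrow> 'k) \<Rightarrow> ('k \<Rightarrow> 'v)).
        closedin (I_topology I) C \<and> continuous_map (I_topology I) (I_topology I) \<Phi> \<and> \<Phi> ` C = A)"

end

theory Submission
  imports Defs
begin

lemma I_top_UNIV: "ideal_on I \<Longrightarrow> topspace (I_topology I) = UNIV"
  unfolding I_topology_def I_basic_def ideal_on_def
  by (auto intro!: exI[of _ UNIV] exI[of _ "{}"])

lemma det_open:
  fixes S :: "('k \<Rightarrow> 'v) set"
  assumes U: "U \<in> I"
    and det: "\<And>x y. x \<in> S \<Longrightarrow> (\<forall>u\<in>U. y u = x u) \<Longrightarrow> y \<in> S"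
  shows "openin (I_topology I) S"
proof -
  have eq: "S = \<Union> ((\<lambda>x. {y. \<forall>d\<in>U. y d = x d}) ` S)"
    using det by auto
  have "generate_topology_on (I_basic I) (\<Union> ((\<lambda>x. {y. \<forall>d\<in>U. y d = x d}) ` S))"
    apply (rule generate_topology_on.UN)
    using U by (auto simp: I_basic_def intro!: generate_topology_on.Basis)
  then show ?thesis
    unfolding I_topology_def openin_topology_generated_by_iff using eq by simp
qed

lemma main:
  fixes Phi :: "('k \<Rightarrow> 'k) \<Rightarrow> ('k \<Rightarrow> 'v)"
  assumes id: "ideal_on I" and U: "U \<in> I"
    and det: "\<And>x y. (\<forall>u\<in>U. y u = x u) \<Longrightarrow> Phi y = Phi x"
    and sur: "surj Phi"
  shows "I_analytic I (A :: ('k \<Rightarrow> 'v) set)"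
proof -
  have cont: "continuous_map (I_topology I) (I_topology I) Phi"
    unfolding continuous_map_def
  proof (intro conjI allI impI)
    show "Phi \<in> topspace (I_topology I) \<rightarrow> topspace (I_topology I)"
      using I_top_UNIV[OF id] by auto
    fix S :: "('k \<Rightarrow> 'v) set"
    show "openin (I_topology I) {x \<in> topspace (I_topology I). Phi x \<in> S}"
      using I_top_UNIV[OF id] by (auto intro!: det_open[OF U] dest: det)
  qed
  have "openin (I_topology I) (UNIV - {x. Phi x \<in> A})"
    by (rule det_open[OF U]) (auto dest: det)
  then have cl: "closedin (I_topology I) {x. Phi x \<in> A}"
    proof -
    have "topspace (I_topology I :: ('k \<Rightarrow> 'k) topology) = UNIV" by (rule I_top_UNIV[OF id])
    then show ?thesis unfolding closedin_def using \<open>openin _ _\<close> by simp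
  qed
  have "Phi ` {x. Phi x \<in> A} = A"
    using sur by (auto simp: surj_def)
  then show ?thesis unfolding I_analytic_def using cl cont by blast
qed

theorem corollary5p3:
  fixes r :: "'k rel" and I :: "'k set set"
  assumes "uncountable_regular_cardinal r"
    and "proper_ideal I"
    and "complete_ideal r I"
    and "\<forall>B. bounded_in r B \<longrightarrow> B \<in> I"
    and "\<exists>U\<in>I. \<not> bounded_in r U"
  shows "(\<forall>A :: ('k \<Rightarrow> bool) set. I_analytic I A) \<and> (\<forall>A :: ('k \<Rightarrow> 'k) set. I_analytic I A)"
proof -
  obtain U where U: "U \<in> I" and ub: "\<not> bounded_in r U" using assms(5) by blast
  have id: "ideal_on I" using assms(2) proper_ideal_def by blast
  have co: "Card_order r" and F: "Field r = UNIV" and reg: "regularCard r"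
    and unc: "\<not> countable (UNIV :: 'k set)"
    using assms(1) unfolding uncountable_regular_cardinal_def by auto
  have wo: "Well_order r" using co by (simp add: card_order_on_well_order_on)
  have tot: "\<And>a b. a \<noteq> b \<Longrightarrow> (a, b) \<in> r \<or> (b, a) \<in> r"
    using wo F unfolding well_order_on_def linear_order_on_def total_on_def by auto
  have cof: "cofinal U r"
    unfolding cofinal_def
  proof
    fix a assume "a \<in> Field r"
    from ub obtain x where "x \<in> U" "(x, a) \<notin> r" unfolding bounded_in_def by blast
    moreover have "x \<noteq> a" using \<open>(x, a) \<notin> r\<close> wo F
      by (metis UNIV_I refl_onD well_order_on_def linear_order_on_def partial_order_on_def preorder_on_def)
    ultimately show "\<exists>b\<in>U. a \<noteq> b \<and> (a, b) \<in> r" using tot[of x a] by metis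
  qed
  have "(card_of U, r) \<in> ordIso" using reg cof F unfolding regularCard_def by auto
  moreover have "(card_of (UNIV :: 'k set), r) \<in> ordIso" using card_of_Field_ordIso[OF co] F by simp
  ultimately have "(card_of U, card_of (UNIV :: 'k set)) \<in> ordIso"
    using ordIso_symmetric ordIso_transitive by blast
  then obtain e where e: "bij_betw e (UNIV :: 'k set) U"
    using card_of_ordIso ordIso_symmetric by blast
  have einj: "inj e" and eU: "\<And>a. e a \<in> U" using e by (auto simp: bij_betw_def)
  obtain c0 c1 :: 'k where c: "c0 \<noteq> c1"
    using unc by (metis countable_finite finite.simps UNIV_eq_I insertI1 singletonD
        finite.emptyI finite.insertI)
  have A1: "\<forall>A :: ('k \<Rightarrow> bool) set. I_analytic I A"
  proof
    fix A :: "('k \<Rightarrow> bool) set"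
    show "I_analytic I A"
    proof (rule main[OF id U, where Phi = "\<lambda>x a. x (e a) = c0"])
      show "\<And>x y. (\<forall>u\<in>U. y u = x u) \<Longrightarrow> (\<lambda>a. y (e a) = c0) = (\<lambda>a. x (e a) = c0)"
        using eU by auto
      show "surj (\<lambda>x a. x (e a) = c0)"
        by (rule surjI[where f="\<lambda>y u. if y (inv e u) then c0 else c1"]) (use einj c in \<open>auto simp: fun_eq_iff\<close>)
    qed
  qed
  have A2: "\<forall>A :: ('k \<Rightarrow> 'k) set. I_analytic I A"
  proof
    fix A :: "('k \<Rightarrow> 'k) set"
    show "I_analytic I A"
    proof (rule main[OF id U, where Phi = "\<lambda>x a. x (e a)"])
      show "\<And>x y. (\<forall>u\<in>U. y u = x u) \<Longrightarrow> (\<lambda>a. y (e a)) = (\<lambda>a. x (e a))"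
        using eU by auto
      show "surj (\<lambda>x a. x (e a))"
        by (rule surjI[where f="\<lambda>y u. y (inv e u)"]) (use einj in \<open>auto simp: fun_eq_iff\<close>)
    qed
  qed
  show ?thesis using A1 A2 by blast
qed

end
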